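(* Let $\alpha=1^{a_1}2^{a_2}\cdots$ be a partition and $n\geq 0$ an integer. Then $$\Big\{\binom X\alpha\Big\}_n=\begin{cases}\dfrac{\mathrm{sgn}(\alpha)}{z_\alpha} & \text{if } n\in\{|\alpha|,|\alpha|+1\},\\[2mm] 0 & \text{otherwise,}\end{cases}$$ where $z_\alpha=\prod_i i^{a_i}a_i!$ and $\mathrm{sgn}(\alpha)=(-1)^{|\alpha|-l(\alpha)}$ is the value of the sign character on a permutation of cycle type $\alpha$.
   Context: For $i\geq 1$, $X_i$ is the class function on $S_n$ (for every $n$) with $X_i(\sigma)$ = number of cycles of length $i$ of $\sigma$. A partition $\alpha$ is written in exponential notation $1^{a_1}2^{a_2}\cdots$ where $a_i$ is the number of parts equal to $i$; $|\alpha|=\sum_i ia_i$ and $l(\alpha)=\sum_i a_i$. Define $\binom X\alpha=\prod_i\binom{X_i}{a_i}\in\mathbb C[X_1,X_2,\dotsc]$. For $p\in\mathbb C[X_1,X_2,\dotsc]$ the signed moment is $\{p\}_n=\frac1{n!}\sum_{\sigma\in S_n}\mathrm{sgn}(\sigma)\,p(X_1(\sigma),X_2(\sigma),\dotsc)$ (with $S_0$ the trivial group). *)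

theory Defs
  imports Complex_Main "HOL-Combinatorics.Combinatorics"
begin

text \<open>Permutations in S_n are modelled as functions nat => nat permuting {0..<n}.
  X_i(sigma) = number of cycles (orbits, fixed points included) of length i.\<close>

definition cycle_count :: "nat \<Rightarrow> nat \<Rightarrow> (nat \<Rightarrow> nat) \<Rightarrow> nat" where
  "cycle_count n i \<sigma> = card {orbit \<sigma> x | x. x \<in> {0..<n} \<and> card (orbit \<sigma> x) = i}"

text \<open>A partition alpha = 1^{a_1} 2^{a_2} ... is given by its multiplicity function a
  (a 0 = 0, finite support).\<close>

definition is_partition :: "(nat \<Rightarrow> nat) \<Rightarrow> bool" where
  "is_partition a \<longleftrightarrow> a 0 = 0 \<and> finite {i. a i \<noteq> 0}"

definition part_size :: "(nat \<Rightarrow> nat) \<Rightarrow> nat" where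
  "part_size a = (\<Sum>i\<in>{i. a i \<noteq> 0}. i * a i)"

definition part_length :: "(nat \<Rightarrow> nat) \<Rightarrow> nat" where
  "part_length a = (\<Sum>i\<in>{i. a i \<noteq> 0}. a i)"

definition z_part :: "(nat \<Rightarrow> nat) \<Rightarrow> nat" where
  "z_part a = (\<Prod>i\<in>{i. a i \<noteq> 0}. i ^ a i * fact (a i))"

definition sgn_part :: "(nat \<Rightarrow> nat) \<Rightarrow> int" where
  "sgn_part a = (-1) ^ (part_size a - part_length a)"

definition binomX :: "(nat \<Rightarrow> nat) \<Rightarrow> nat \<Rightarrow> (nat \<Rightarrow> nat) \<Rightarrow> complex" where
  "binomX a n \<sigma> = (\<Prod>i\<in>{i. a i \<noteq> 0}. of_nat (cycle_count n i \<sigma> choose a i))"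

definition signed_moment :: "nat \<Rightarrow> ((nat \<Rightarrow> nat) \<Rightarrow> complex) \<Rightarrow> complex" where
  "signed_moment n p = (1 / of_nat (fact n)) *
     (\<Sum>\<sigma>\<in>{\<sigma>. \<sigma> permutes {0..<n}}. of_int (sign \<sigma>) * p \<sigma>)"

end

theory Submission
  imports Defs
begin


lemma cycle_funpow_hd:
  assumes "distinct L" "L \<noteq> []"
  shows "(cycle_of_list L ^^ i) (hd L) = L ! (i mod length L)"
proof -
  have "map (cycle_of_list L ^^ i) L = rotate i L" using cyclic_rotation[OF assms(1)] .
  hence "(map (cycle_of_list L ^^ i) L) ! 0 = rotate i L ! 0" by simp
  thus ?thesis using assms by (simp add: nth_rotate hd_conv_nth)
qed

lemma cycle_orbit_hd:
  assumes "distinct L" "L \<noteq> []"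
  shows "orbit (cycle_of_list L) (hd L) = set L"
proof
  show "orbit (cycle_of_list L) (hd L) \<subseteq> set L"
    unfolding orbit_altdef using cycle_funpow_hd[OF assms] assms by auto
next
  show "set L \<subseteq> orbit (cycle_of_list L) (hd L)"
  proof
    fix y assume "y \<in> set L"
    then obtain j where j: "j < length L" "y = L ! j" by (auto simp: in_set_conv_nth)
    define m where "m = (if j = 0 then length L else j)"
    have "0 < m" using j assms by (auto simp: m_def)
    moreover have "(cycle_of_list L ^^ m) (hd L) = y"
      using cycle_funpow_hd[OF assms, of m] j by (auto simp: m_def)
    ultimately show "y \<in> orbit (cycle_of_list L) (hd L)" unfolding orbit_altdef by blast
  qed
qed

lemma cycle_cyclic_on:
  assumes "distinct L" "L \<noteq> []"
  shows "cyclic_on (cycle_of_list L) (set L)"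
  using cycle_orbit_hd[OF assms] assms by (intro cyclic_on_singleI[of "hd L"]) auto

lemma sign_cycle_of_list:
  assumes "distinct L"
  shows "sign (cycle_of_list L) = (-1) ^ (length L - 1)"
  using assms
proof (induction L rule: cycle_of_list.induct)
  case (1 i j cs)
  have "sign (cycle_of_list (i # j # cs)) = sign (transpose i j) * sign (cycle_of_list (j # cs))"
    by (simp add: sign_compose permutation_swap_id permutation_of_cycle)
  also have "\<dots> = - ((-1) ^ length cs)" using 1 by (simp add: sign_swap_id)
  finally show ?case by (simp only: cycle_of_list.simps length_Cons) simp
qed (auto)

lemma cyclic_perm_is_cycle:
  assumes "g permutes Q" "cyclic_on g Q" "x0 \<in> Q" "finite Q"
  shows "\<exists>r. r \<in> permutations_of_set (Q - {x0}) \<and> g = cycle_of_list (x0 # r)"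
proof -
  have pg: "permutation g" using assms by (auto simp: permutation_permutes)
  define L where "L = support g x0"
  have dL: "distinct L" unfolding L_def by (rule cycle_of_permutation[OF pg])
  have lp: "least_power g x0 > 0" using least_power_of_permutation(2)[OF pg] .
  have sL: "set L = Q"
  proof -
    have "set L = range (\<lambda>i. (g ^^ i) x0)" unfolding L_def by (rule support_set[OF pg])
    also have "\<dots> = orbit g x0" using orbit_altdef_permutation[OF pg, of x0] by auto
    also have "\<dots> = Q" using orbit_cyclic_eq3[OF assms(2,3)] .
    finally show ?thesis .
  qed
  have hL: "L = x0 # tl L"
  proof -
    have "L \<noteq> []" using lp by (simp add: L_def)
    moreover have "hd L = x0" using lp by (simp add: L_def hd_map upt_conv_Cons)
    ultimately show ?thesis by (metis list.exhaust_sel)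
  qed
  have gL: "g = cycle_of_list L"
  proof
    fix b show "g b = cycle_of_list L b"
    proof (cases "b \<in> set L")
      case True thus ?thesis unfolding L_def using cycle_restrict[OF pg] by auto
    next
      case False
      hence "b \<notin> Q" using sL by simp
      thus ?thesis using False assms(1) by (simp add: permutes_not_in id_outside_supp)
    qed
  qed
  have "tl L \<in> permutations_of_set (Q - {x0})"
    using dL sL hL by (metis distinct.simps(2) list.simps(15) Diff_insert_absorb permutations_of_setI)
  thus ?thesis using gL hL by metis
qed

lemma cycle_inj:
  assumes "r1 \<in> permutations_of_set (Q - {x0})" "r2 \<in> permutations_of_set (Q - {x0})" "x0 \<in> Q"
    "cycle_of_list (x0 # r1) = cycle_of_list (x0 # r2)"
  shows "r1 = r2"
proof -
  have d1: "distinct (x0 # r1)" and d2: "distinct (x0 # r2)" using assms by (auto simp: permutations_of_set_def)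
  have "length r1 = length r2" using assms(1,2) by (metis permutations_of_setD distinct_card)
  hence len: "length (x0 # r1) = length (x0 # r2)" by simp
  have "(x0 # r1) ! i = (x0 # r2) ! i" if "i < length (x0 # r1)" for i
    using cycle_funpow_hd[OF d1, of i] cycle_funpow_hd[OF d2, of i] that len assms(4) by simp
  hence "x0 # r1 = x0 # r2" using len by (metis nth_equalityI)
  thus ?thesis by simp
qed

definition Cyc :: "'a set \<Rightarrow> ('a \<Rightarrow> 'a) set" where
  "Cyc Q = {g. g permutes Q \<and> cyclic_on g Q}"

lemma Cyc_image:
  assumes "x0 \<in> Q" "finite Q"
  shows "Cyc Q = (\<lambda>r. cycle_of_list (x0 # r)) ` permutations_of_set (Q - {x0})"
proof
  show "Cyc Q \<subseteq> (\<lambda>r. cycle_of_list (x0 # r)) ` permutations_of_set (Q - {x0})"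
    using cyclic_perm_is_cycle[OF _ _ assms(1,2)] by (auto simp: Cyc_def)
next
  show "(\<lambda>r. cycle_of_list (x0 # r)) ` permutations_of_set (Q - {x0}) \<subseteq> Cyc Q"
  proof
    fix g assume "g \<in> (\<lambda>r. cycle_of_list (x0 # r)) ` permutations_of_set (Q - {x0})"
    then obtain r where r: "r \<in> permutations_of_set (Q - {x0})" "g = cycle_of_list (x0 # r)" by auto
    have d: "distinct (x0 # r)" and s: "set (x0 # r) = Q" using r(1) assms(1)
      by (auto simp: permutations_of_set_def)
    have "g permutes Q" using cycle_permutes[of "x0 # r"] r(2) s by simp
    moreover have "cyclic_on g Q" using cycle_cyclic_on[OF d] r(2) s by simp
    ultimately show "g \<in> Cyc Q" by (simp add: Cyc_def)
  qed
qed

lemma sum_sign_Cyc: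
  assumes "finite Q" "card Q = k" "k > 0"
  shows "(\<Sum>g\<in>Cyc Q. (of_int (sign g) :: complex)) = (-1) ^ (k - 1) * of_nat (fact (k - 1))"
proof -
  obtain x0 where x0: "x0 \<in> Q" using assms by fastforce
  have inj: "inj_on (\<lambda>r. cycle_of_list (x0 # r)) (permutations_of_set (Q - {x0}))"
    using cycle_inj[OF _ _ x0] by (meson inj_onI)
  have "(\<Sum>g\<in>Cyc Q. (of_int (sign g) :: complex)) =
     (\<Sum>r\<in>permutations_of_set (Q - {x0}). of_int (sign (cycle_of_list (x0 # r))))"
    unfolding Cyc_image[OF x0 assms(1)] by (rule sum.reindex[OF inj, unfolded comp_def])
  also have "\<dots> = (\<Sum>r\<in>permutations_of_set (Q - {x0}). (-1) ^ (k - 1))"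
  proof (rule sum.cong[OF refl])
    fix r assume r: "r \<in> permutations_of_set (Q - {x0})"
    have d: "distinct (x0 # r)" and s: "set (x0 # r) = Q" using r x0
      by (auto simp: permutations_of_set_def)
    have "length (x0 # r) = k" using distinct_card[OF d] s assms(2) by simp
    thus "(of_int (sign (cycle_of_list (x0 # r))) :: complex) = (-1) ^ (k - 1)"
      using sign_cycle_of_list[OF d] by simp
  qed
  also have "\<dots> = (-1) ^ (k - 1) * of_nat (fact (k - 1))"
    using assms x0 by (simp add: card_Diff_singleton)
  finally show ?thesis .
qed



lemma sum_sign_perm:
  assumes "finite B"
  shows "(\<Sum>s\<in>{s. s permutes B}. (of_int (sign s) :: complex)) = (if card B \<le> 1 then 1 else 0)"
proof (cases "card B \<le> 1")
  case True
  have c: "card {s. s permutes B} = 1" using card_permutations[OF refl assms] True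
    by (cases "card B") auto
  have "id \<in> {s. s permutes B}" by (simp add: permutes_id)
  hence "{s. s permutes B} = {id}" using c by (metis card_1_singletonE singletonD)
  thus ?thesis using True by simp
next
  case False
  hence "\<not> (\<forall>x\<in>B. \<forall>y\<in>B. x = y)" using card_le_Suc0_iff_eq[OF assms] by simp
  then obtain x y where xy: "x \<in> B" "y \<in> B" "x \<noteq> y" by auto
  let ?t = "transpose x y"
  have t: "?t permutes B" by (rule permutes_swap_id[OF xy(1,2)])
  let ?S = "(\<Sum>s\<in>{s. s permutes B}. (of_int (sign s) :: complex))"
  have "?S = (\<Sum>s\<in>{s. s permutes B}. of_int (sign (s \<circ> ?t)))"
    by (rule sum_permutations_compose_right[OF t])
  also have "\<dots> = (\<Sum>s\<in>{s. s permutes B}. - of_int (sign s))"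
  proof (rule sum.cong[OF refl])
    fix s assume "s \<in> {s. s permutes B}"
    hence "permutation s" using assms by (auto simp: permutation_permutes)
    thus "(of_int (sign (s \<circ> ?t)) :: complex) = - of_int (sign s)"
      using xy by (simp add: sign_compose permutation_swap_id sign_swap_id)
  qed
  also have "\<dots> = - ?S" by (simp add: sum_negf)
  finally have "?S = 0" by simp
  thus ?thesis using False by simp
qed

lemma perm_restrict_cyclic_permutes:
  assumes "s permutes A" "finite A" "cyclic_on s Q"
  shows "perm_restrict s Q permutes Q"
proof (rule bij_imp_permutes)
  have ps: "permutation s" using assms by (auto simp: permutation_permutes)
  have "s ` Q = Q"
  proof
    show "s ` Q \<subseteq> Q" using cyclic_on_inI[OF assms(3)] by auto
    show "Q \<subseteq> s ` Q"
    proof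
      fix y assume y: "y \<in> Q"
      have "Q = orbit s y" using orbit_cyclic_eq3[OF assms(3) y] by simp
      also have "\<dots> = orbit (inv s) y" using orbit_inv_eq[OF ps] by simp
      finally have "inv s y \<in> Q" using orbit.base[of "inv s" y] by simp
      moreover have "s (inv s y) = y" using permutes_inverses(1)[OF assms(1)] by simp
      ultimately show "y \<in> s ` Q" by (metis image_eqI)
    qed
  qed
  moreover have "inj_on s Q" using permutes_inj_on[OF assms(1)] .
  ultimately have "bij_betw s Q Q" by (simp add: bij_betw_def)
  thus "bij_betw (perm_restrict s Q) Q Q"
    by (rule bij_betw_cong[THEN iffD1, rotated]) (simp add: perm_restrict_simps)
  show "\<And>x. x \<notin> Q \<Longrightarrow> perm_restrict s Q x = x" by (simp add: perm_restrict_simps)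
qed

lemma perm_split_sum:
  assumes "finite A" "Q \<subseteq> A"
  shows "(\<Sum>s\<in>{s. s permutes A \<and> cyclic_on s Q}. (f s :: complex)) =
         (\<Sum>p\<in>Cyc Q \<times> {r. r permutes (A - Q)}. f (fst p \<circ> snd p))"
proof (rule sum.reindex_bij_witness[where i = "\<lambda>p. fst p \<circ> snd p"
      and j = "\<lambda>s. (perm_restrict s Q, perm_restrict s (A - Q))"])
  fix s assume s: "s \<in> {s. s permutes A \<and> cyclic_on s Q}"
  have p1: "perm_restrict s Q permutes Q" using perm_restrict_cyclic_permutes s assms by auto
  have p2: "perm_restrict s (A - Q) permutes (A - Q)" using perm_restrict_diff_cyclic s by auto
  have QA: "Q \<union> (A - Q) = A" using assms by auto
  have comp: "perm_restrict s Q \<circ> perm_restrict s (A - Q) = s"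
    using perm_restrict_union[OF p1 p2] QA s by simp
  show "fst (perm_restrict s Q, perm_restrict s (A - Q)) \<circ>
      snd (perm_restrict s Q, perm_restrict s (A - Q)) = s" using comp by simp
  show "(perm_restrict s Q, perm_restrict s (A - Q)) \<in> Cyc Q \<times> {r. r permutes A - Q}"
    using p1 p2 s by (simp add: Cyc_def cyclic_on_perm_restrict)
  show "f (fst (perm_restrict s Q, perm_restrict s (A - Q)) \<circ> snd (perm_restrict s Q, perm_restrict s (A - Q))) = f s"
    using comp by simp
next
  fix p assume p: "p \<in> Cyc Q \<times> {r. r permutes A - Q}"
  obtain g r where gr: "p = (g, r)" by (cases p)
  have g: "g permutes Q" "cyclic_on g Q" and r: "r permutes A - Q" using p gr by (auto simp: Cyc_def)
  have "perm_restrict (g \<circ> r) Q = g"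
  proof
    fix x show "perm_restrict (g \<circ> r) Q x = g x"
      using g r by (cases "x \<in> Q") (auto simp: perm_restrict_simps permutes_not_in)
  qed
  moreover have "perm_restrict (g \<circ> r) (A - Q) = r"
  proof
    fix x show "perm_restrict (g \<circ> r) (A - Q) x = r x"
    proof (cases "x \<in> A - Q")
      case True
      hence "r x \<in> A - Q" using r by (metis permutes_in_image)
      hence "g (r x) = r x" using g by (auto simp: permutes_not_in)
      thus ?thesis using True by (simp add: perm_restrict_simps)
    next
      case False thus ?thesis using r by (simp add: perm_restrict_simps permutes_not_in)
    qed
  qed
  ultimately show "(perm_restrict (fst p \<circ> snd p) Q, perm_restrict (fst p \<circ> snd p) (A - Q)) = p"
    using gr by simp
  have "g permutes A" using permutes_subset[OF g(1)] assms(2) .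
  moreover have "r permutes A" using permutes_subset[OF r] by auto
  ultimately have "g \<circ> r permutes A" by (rule permutes_compose[rotated])
  moreover have "cyclic_on (g \<circ> r) Q"
    by (rule permutes_comp_preserves_cyclic1[OF r g(2), of Q]) auto
  ultimately show "fst p \<circ> snd p \<in> {s. s permutes A \<and> cyclic_on s Q}" using gr by simp
qed

definition cc :: "'a set \<Rightarrow> nat \<Rightarrow> ('a \<Rightarrow> 'a) \<Rightarrow> nat" where
  "cc A i s = card {orbit s x | x. x \<in> A \<and> card (orbit s x) = i}"

lemma orbit_restrict:
  assumes "s permutes A" "finite A" "cyclic_on s Q" "x \<in> A - Q"
  shows "orbit (perm_restrict s (A - Q)) x = orbit s x" and "orbit s x \<subseteq> A - Q"
proof -
  have ps: "permutation s" using assms by (auto simp: permutation_permutes)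
  have sub: "orbit s x \<subseteq> A" using permutes_orbit_subset[OF assms(1)] assms(4) by auto
  have disj: "orbit s x \<inter> Q = {}"
  proof (rule ccontr)
    assume "orbit s x \<inter> Q \<noteq> {}"
    then obtain y where y: "y \<in> orbit s x" "y \<in> Q" by auto
    have "x \<in> orbit s y" using orbit_swap[OF permutation_self_in_orbit[OF ps] y(1)] .
    hence "x \<in> Q" using orbit_cyclic_eq3[OF assms(3) y(2)] by simp
    thus False using assms(4) by simp
  qed
  show "orbit s x \<subseteq> A - Q" using sub disj by auto
  show "orbit (perm_restrict s (A - Q)) x = orbit s x"
    by (rule orbit_cong[OF permutation_self_in_orbit[OF ps]])
       (use \<open>orbit s x \<subseteq> A - Q\<close> in \<open>auto simp: perm_restrict_simps\<close>)
qed

lemma cc_restrict: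
  assumes "s permutes A" "finite A" "cyclic_on s Q" "Q \<subseteq> A"
  shows "cc (A - Q) i (perm_restrict s (A - Q)) = cc A i s - (if i = card Q then 1 else 0)"
proof -
  have ps: "permutation s" using assms by (auto simp: permutation_permutes)
  let ?S = "{orbit s x | x. x \<in> A \<and> card (orbit s x) = i}"
  have eq: "{orbit (perm_restrict s (A - Q)) x | x. x \<in> A - Q \<and> card (orbit (perm_restrict s (A - Q)) x) = i}
      = ?S - {Q}"
  proof (intro set_eqI iffI)
    fix O' assume "O' \<in> {orbit (perm_restrict s (A - Q)) x | x. x \<in> A - Q \<and> card (orbit (perm_restrict s (A - Q)) x) = i}"
    then obtain x where x: "x \<in> A - Q" "O' = orbit (perm_restrict s (A - Q)) x"
      "card (orbit (perm_restrict s (A - Q)) x) = i" by blast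
    have e: "O' = orbit s x" using orbit_restrict(1)[OF assms(1-3) x(1)] x(2) by simp
    have "x \<in> orbit s x" by (rule permutation_self_in_orbit[OF ps])
    hence "O' \<noteq> Q" using e x(1) by auto
    thus "O' \<in> ?S - {Q}" using e x orbit_restrict(1)[OF assms(1-3) x(1)] by auto
  next
    fix O' assume "O' \<in> ?S - {Q}"
    then obtain x where x: "x \<in> A" "O' = orbit s x" "card (orbit s x) = i" "O' \<noteq> Q" by blast
    have "x \<notin> Q" using orbit_cyclic_eq3[OF assms(3)] x by auto
    hence xx: "x \<in> A - Q" using x by simp
    show "O' \<in> {orbit (perm_restrict s (A - Q)) x | x. x \<in> A - Q \<and> card (orbit (perm_restrict s (A - Q)) x) = i}"
      using orbit_restrict(1)[OF assms(1-3) xx] x xx by auto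
  qed
  have fin: "finite ?S" using assms(2) by simp
  have QS: "Q \<in> ?S \<longleftrightarrow> i = card Q"
  proof
    assume "Q \<in> ?S" thus "i = card Q" by auto
  next
    assume i: "i = card Q"
    obtain q where q: "q \<in> Q" using assms(3) by (auto simp: cyclic_on_def)
    have "Q = orbit s q" using orbit_cyclic_eq3[OF assms(3) q] by simp
    thus "Q \<in> ?S" using q assms(4) i by auto
  qed
  have "card (?S - {Q}) = card ?S - (if i = card Q then 1 else 0)"
  proof (cases "i = card Q")
    case True
    hence "Q \<in> ?S" using QS by blast
    thus ?thesis using True card_Diff_singleton[OF \<open>Q \<in> ?S\<close>] by simp
  next
    case False
    hence "Q \<notin> ?S" using QS by blast
    thus ?thesis using False by simp
  qed
  thus ?thesis unfolding cc_def eq .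
qed

lemma cycles_eq:
  assumes "s permutes A" "finite A"
  shows "{Q. Q \<subseteq> A \<and> card Q = k \<and> cyclic_on s Q} = {orbit s x | x. x \<in> A \<and> card (orbit s x) = k}"
proof (intro set_eqI iffI)
  fix Q assume "Q \<in> {Q. Q \<subseteq> A \<and> card Q = k \<and> cyclic_on s Q}"
  thus "Q \<in> {orbit s x | x. x \<in> A \<and> card (orbit s x) = k}"
    by (auto simp: cyclic_on_def)
next
  fix Q assume "Q \<in> {orbit s x | x. x \<in> A \<and> card (orbit s x) = k}"
  then obtain x where x: "x \<in> A" "Q = orbit s x" "card Q = k" by auto
  show "Q \<in> {Q. Q \<subseteq> A \<and> card Q = k \<and> cyclic_on s Q}"
    using x permutes_orbit_subset[OF assms(1) x(1)] cyclic_on_orbit[OF assms] by auto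
qed



definition bx :: "(nat \<Rightarrow> nat) \<Rightarrow> 'a set \<Rightarrow> ('a \<Rightarrow> 'a) \<Rightarrow> complex" where
  "bx a A s = (\<Prod>i\<in>{i. a i \<noteq> 0}. of_nat (cc A i s choose a i))"

definition GG :: "'a set \<Rightarrow> (nat \<Rightarrow> nat) \<Rightarrow> complex" where
  "GG A a = (\<Sum>s\<in>{s. s permutes A}. of_int (sign s) * bx a A s)"

lemma binom_shift: "(a::nat) > 0 \<Longrightarrow> a * (c choose a) = c * ((c - 1) choose (a - 1))"
proof -
  assume "a > 0"
  then obtain a' where a: "a = Suc a'" by (cases a) auto
  show ?thesis
  proof (cases c)
    case 0 thus ?thesis using a by simp
  next
    case (Suc c')
    thus ?thesis using a Suc_times_binomial_eq[of c' a'] by (simp add: mult.commute)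
  qed
qed

lemma perm_restrict_comp_eq:
  assumes "g permutes Q" "r permutes A - Q"
  shows "perm_restrict (g \<circ> r) (A - Q) = r"
proof
  fix x show "perm_restrict (g \<circ> r) (A - Q) x = r x"
  proof (cases "x \<in> A - Q")
    case True
    hence "r x \<in> A - Q" using assms(2) by (metis permutes_in_image)
    hence "g (r x) = r x" using assms(1) by (auto simp: permutes_not_in)
    thus ?thesis using True by (simp add: perm_restrict_simps)
  next
    case False thus ?thesis using assms(2) by (simp add: perm_restrict_simps permutes_not_in)
  qed
qed

lemma bx_step:
  assumes "is_partition a" "a k > 0" "s permutes A" "finite A"
  shows "of_nat (a k) * bx a A s =
    (\<Sum>Q\<in>{Q. Q \<in> {Q. Q \<subseteq> A \<and> card Q = k} \<and> cyclic_on s Q}.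
        bx (a(k := a k - 1)) (A - Q) (perm_restrict s (A - Q)))"
proof -
  let ?a' = "a(k := a k - 1)"
  let ?c = "\<lambda>i. cc A i s"
  let ?S = "{i. a i \<noteq> 0}"
  let ?f = "\<lambda>i. (of_nat ((?c i - (if i = k then 1 else 0)) choose ?a' i) :: complex)"
  have finS: "finite ?S" using assms(1) by (simp add: is_partition_def)
  have kS: "k \<in> ?S" using assms(2) by simp
  have CS: "{Q. Q \<in> {Q. Q \<subseteq> A \<and> card Q = k} \<and> cyclic_on s Q} = {orbit s x | x. x \<in> A \<and> card (orbit s x) = k}"
    using cycles_eq[OF assms(3,4), of k] by auto
  have tm: "bx ?a' (A - Q) (perm_restrict s (A - Q)) = (\<Prod>i\<in>{i. ?a' i \<noteq> 0}. ?f i)"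
    if "Q \<in> {Q. Q \<in> {Q. Q \<subseteq> A \<and> card Q = k} \<and> cyclic_on s Q}" for Q
    using that cc_restrict[OF assms(3,4)] unfolding bx_def by (intro prod.cong) auto
  have "(\<Sum>Q\<in>{Q. Q \<in> {Q. Q \<subseteq> A \<and> card Q = k} \<and> cyclic_on s Q}.
        bx ?a' (A - Q) (perm_restrict s (A - Q))) = of_nat (?c k) * (\<Prod>i\<in>{i. ?a' i \<noteq> 0}. ?f i)"
  proof -
    let ?X = "{Q. Q \<in> {Q. Q \<subseteq> A \<and> card Q = k} \<and> cyclic_on s Q}"
    have "(\<Sum>Q\<in>?X. bx ?a' (A - Q) (perm_restrict s (A - Q))) = (\<Sum>Q\<in>?X. (\<Prod>i\<in>{i. ?a' i \<noteq> 0}. ?f i))"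
      by (rule sum.cong[OF refl]) (rule tm)
    also have "\<dots> = of_nat (card ?X) * (\<Prod>i\<in>{i. ?a' i \<noteq> 0}. ?f i)" by simp
    also have "card ?X = ?c k" unfolding CS cc_def ..
    finally show ?thesis .
  qed
  also have "(\<Prod>i\<in>{i. ?a' i \<noteq> 0}. ?f i) = (\<Prod>i\<in>?S. ?f i)"
    by (rule prod.mono_neutral_left[OF finS]) auto
  also have "\<dots> = ?f k * (\<Prod>i\<in>?S - {k}. ?f i)" by (rule prod.remove[OF finS kS])
  also have "(\<Prod>i\<in>?S - {k}. ?f i) = (\<Prod>i\<in>?S - {k}. of_nat (?c i choose a i))"
    by (intro prod.cong) auto
  finally have R0: "(\<Sum>Q\<in>{Q. Q \<in> {Q. Q \<subseteq> A \<and> card Q = k} \<and> cyclic_on s Q}.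
        bx ?a' (A - Q) (perm_restrict s (A - Q))) =
     of_nat (?c k) * (?f k * (\<Prod>i\<in>?S - {k}. of_nat (?c i choose a i)))" .
  have fk: "?f k = of_nat ((?c k - 1) choose (a k - 1))" by simp
  have R: "(\<Sum>Q\<in>{Q. Q \<in> {Q. Q \<subseteq> A \<and> card Q = k} \<and> cyclic_on s Q}.
        bx ?a' (A - Q) (perm_restrict s (A - Q))) =
     of_nat (?c k * ((?c k - 1) choose (a k - 1))) * (\<Prod>i\<in>?S - {k}. of_nat (?c i choose a i))"
    unfolding R0 fk by (simp only: of_nat_mult mult.assoc)
  have "of_nat (a k) * bx a A s = of_nat (a k) * (of_nat (?c k choose a k) * (\<Prod>i\<in>?S - {k}. of_nat (?c i choose a i)))"
    unfolding bx_def by (subst prod.remove[OF finS kS]) (rule refl)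
  also have "\<dots> = of_nat (a k * (?c k choose a k)) * (\<Prod>i\<in>?S - {k}. of_nat (?c i choose a i))"
    by simp
  also have "a k * (?c k choose a k) = ?c k * ((?c k - 1) choose (a k - 1))"
    using binom_shift[OF assms(2)] .
  finally show ?thesis using R by simp
qed

lemma GG_step:
  assumes "is_partition a" "a k > 0" "finite A"
  shows "of_nat (a k) * GG A a =
    (\<Sum>Q\<in>{Q. Q \<subseteq> A \<and> card Q = k}. (-1) ^ (k - 1) * of_nat (fact (k - 1)) * GG (A - Q) (a(k := a k - 1)))"
proof -
  let ?a' = "a(k := a k - 1)"
  let ?P = "{s. s permutes A}"
  let ?K = "{Q. Q \<subseteq> A \<and> card Q = k}"
  have finP: "finite ?P" using finite_permutations[OF assms(3)] .
  have finK: "finite ?K" using assms(3) by simp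
  have "of_nat (a k) * GG A a = (\<Sum>s\<in>?P. of_int (sign s) * (of_nat (a k) * bx a A s))"
    unfolding GG_def by (simp add: sum_distrib_left algebra_simps)
  also have "\<dots> = (\<Sum>s\<in>?P. \<Sum>Q\<in>{Q. Q \<in> ?K \<and> cyclic_on s Q}.
        of_int (sign s) * bx ?a' (A - Q) (perm_restrict s (A - Q)))"
    using bx_step[OF assms(1,2) _ assms(3)] by (simp add: sum_distrib_left)
  also have "\<dots> = (\<Sum>Q\<in>?K. \<Sum>s\<in>{s. s \<in> ?P \<and> cyclic_on s Q}.
        of_int (sign s) * bx ?a' (A - Q) (perm_restrict s (A - Q)))"
    by (rule sum.swap_restrict[OF finP finK])
  also have "\<dots> = (\<Sum>Q\<in>?K. (-1) ^ (k - 1) * of_nat (fact (k - 1)) * GG (A - Q) ?a')"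
  proof (rule sum.cong[OF refl])
    fix Q assume Q: "Q \<in> ?K"
    have QA: "Q \<subseteq> A" and cQ: "card Q = k" using Q by auto
    have finQ: "finite Q" using QA assms(3) finite_subset by auto
    have k0: "k > 0" using assms(1,2) by (cases k) (auto simp: is_partition_def)
    have "(\<Sum>s\<in>{s. s \<in> ?P \<and> cyclic_on s Q}. of_int (sign s) * bx ?a' (A - Q) (perm_restrict s (A - Q)))
      = (\<Sum>p\<in>Cyc Q \<times> {r. r permutes (A - Q)}.
          of_int (sign (fst p \<circ> snd p)) * bx ?a' (A - Q) (perm_restrict (fst p \<circ> snd p) (A - Q)))"
      using perm_split_sum[OF assms(3) QA] by simp
    also have "\<dots> = (\<Sum>p\<in>Cyc Q \<times> {r. r permutes (A - Q)}.
          of_int (sign (fst p)) * (of_int (sign (snd p)) * bx ?a' (A - Q) (snd p)))"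
    proof (rule sum.cong[OF refl])
      fix p assume p: "p \<in> Cyc Q \<times> {r. r permutes (A - Q)}"
      have g: "fst p permutes Q" and r: "snd p permutes A - Q" using p by (auto simp: Cyc_def)
      have "permutation (fst p)" using g finQ by (auto simp: permutation_permutes)
      moreover have "permutation (snd p)" using r assms(3) by (auto simp: permutation_permutes)
      ultimately have "sign (fst p \<circ> snd p) = sign (fst p) * sign (snd p)" by (rule sign_compose)
      thus "of_int (sign (fst p \<circ> snd p)) * bx ?a' (A - Q) (perm_restrict (fst p \<circ> snd p) (A - Q)) =
          of_int (sign (fst p)) * (of_int (sign (snd p)) * bx ?a' (A - Q) (snd p))"
        using perm_restrict_comp_eq[OF g r] by simp
    qed
    also have "\<dots> = (\<Sum>g\<in>Cyc Q. of_int (sign g)) * GG (A - Q) ?a'"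
      unfolding GG_def sum_product sum.cartesian_product by (simp add: case_prod_beta)
    also have "\<dots> = (-1) ^ (k - 1) * of_nat (fact (k - 1)) * GG (A - Q) ?a'"
      using sum_sign_Cyc[OF finQ cQ k0] by simp
    finally show "(\<Sum>s\<in>{s. s \<in> ?P \<and> cyclic_on s Q}. of_int (sign s) * bx ?a' (A - Q) (perm_restrict s (A - Q)))
      = (-1) ^ (k - 1) * of_nat (fact (k - 1)) * GG (A - Q) ?a'" .
  qed
  finally show ?thesis .
qed



lemma part_size_sup:
  assumes "finite S" "{i. a i \<noteq> 0} \<subseteq> S"
  shows "part_size a = (\<Sum>i\<in>S. i * a i)"
  unfolding part_size_def by (rule sum.mono_neutral_left[OF assms]) auto

lemma part_length_sup:
  assumes "finite S" "{i. a i \<noteq> 0} \<subseteq> S"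
  shows "part_length a = (\<Sum>i\<in>S. a i)"
  unfolding part_length_def by (rule sum.mono_neutral_left[OF assms]) auto

lemma z_part_sup:
  assumes "finite S" "{i. a i \<noteq> 0} \<subseteq> S"
  shows "z_part a = (\<Prod>i\<in>S. i ^ a i * fact (a i))"
  unfolding z_part_def by (rule prod.mono_neutral_left[OF assms]) auto

lemma z_part_pos:
  assumes "is_partition a"
  shows "z_part a > 0"
proof -
  have "\<And>i. a i \<noteq> 0 \<Longrightarrow> i > 0" using assms by (metis gr0I is_partition_def)
  hence P: "\<And>i. i \<in> {i. a i \<noteq> 0} \<Longrightarrow> i ^ a i * fact (a i) > (0::nat)" by simp
  show ?thesis unfolding z_part_def by (rule prod_pos[OF P])
qed

lemma size_ge_length:
  assumes "is_partition a"
  shows "part_length a \<le> part_size a"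
  unfolding part_size_def part_length_def
proof (rule sum_mono)
  fix i assume "i \<in> {i. a i \<noteq> 0}"
  hence "i \<ge> 1" using assms by (cases i) (auto simp: is_partition_def)
  thus "a i \<le> i * a i" by simp
qed

lemma part_step:
  assumes "is_partition a" "a k > 0"
  defines "a' \<equiv> a(k := a k - 1)"
  shows "is_partition a'" "part_size a = part_size a' + k" "part_length a = part_length a' + 1"
    "z_part a = z_part a' * (k * a k)" "sgn_part a = sgn_part a' * (-1) ^ (k - 1)" "k > 0"
proof -
  let ?S = "{i. a i \<noteq> 0}"
  have finS: "finite ?S" using assms(1) by (simp add: is_partition_def)
  have kS: "k \<in> ?S" using assms(2) by simp
  have sub: "{i. a' i \<noteq> 0} \<subseteq> ?S" by (auto simp: a'_def split: if_splits)
  show k0: "k > 0" using assms(1,2) by (cases k) (auto simp: is_partition_def)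
  show "is_partition a'" using assms(1) finite_subset[OF sub finS]
    by (auto simp: is_partition_def a'_def)
  have e1: "(\<Sum>i\<in>?S - {k}. i * a' i) = (\<Sum>i\<in>?S - {k}. i * a i)" by (rule sum.cong) (auto simp: a'_def)
  have "part_size a = k * a k + (\<Sum>i\<in>?S - {k}. i * a i)"
    using part_size_sup[OF finS order.refl] sum.remove[OF finS kS] by simp
  moreover have "part_size a' = k * (a k - 1) + (\<Sum>i\<in>?S - {k}. i * a i)"
    using part_size_sup[OF finS sub] sum.remove[OF finS kS, of "\<lambda>i. i * a' i"] e1 by (simp add: a'_def fun_upd_def)
  moreover have "k * a k = k * (a k - 1) + k" using assms(2) by (cases "a k") auto
  ultimately show ps: "part_size a = part_size a' + k" by simp
  have e2: "(\<Sum>i\<in>?S - {k}. a' i) = (\<Sum>i\<in>?S - {k}. a i)" by (rule sum.cong) (auto simp: a'_def)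
  have "part_length a = a k + (\<Sum>i\<in>?S - {k}. a i)"
    using part_length_sup[OF finS order.refl] sum.remove[OF finS kS] by simp
  moreover have "part_length a' = (a k - 1) + (\<Sum>i\<in>?S - {k}. a i)"
    using part_length_sup[OF finS sub] sum.remove[OF finS kS, of "a'"] e2 by (simp add: a'_def fun_upd_def)
  ultimately show pl: "part_length a = part_length a' + 1" using assms(2) by simp
  have e3: "(\<Prod>i\<in>?S - {k}. i ^ a' i * fact (a' i)) = (\<Prod>i\<in>?S - {k}. i ^ a i * fact (a i))"
    by (rule prod.cong) (auto simp: a'_def)
  have "z_part a = (k ^ a k * fact (a k)) * (\<Prod>i\<in>?S - {k}. i ^ a i * fact (a i))"
    using z_part_sup[OF finS order.refl] prod.remove[OF finS kS] by simp
  moreover have "z_part a' = (k ^ (a k - 1) * fact (a k - 1)) * (\<Prod>i\<in>?S - {k}. i ^ a i * fact (a i))"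
    using z_part_sup[OF finS sub] prod.remove[OF finS kS, of "\<lambda>i. i ^ a' i * fact (a' i)"] e3
    by (simp add: a'_def fun_upd_def)
  moreover have "k ^ a k * fact (a k) = (k ^ (a k - 1) * fact (a k - 1)) * (k * a k)"
  proof -
    obtain m where m: "a k = Suc m" using assms(2) by (cases "a k") auto
    show ?thesis unfolding m by (simp add: fact_Suc algebra_simps)
  qed
  ultimately show "z_part a = z_part a' * (k * a k)" by (simp add: algebra_simps)
  have ge: "part_length a' \<le> part_size a'" by (rule size_ge_length) fact
  have "part_size a - part_length a = (part_size a' - part_length a') + (k - 1)"
    using ps pl ge k0 by simp
  thus "sgn_part a = sgn_part a' * (-1) ^ (k - 1)" unfolding sgn_part_def by (simp add: power_add)
qed




definition gfun :: "nat \<Rightarrow> (nat \<Rightarrow> nat) \<Rightarrow> complex" where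
  "gfun n a = (if n = part_size a \<or> n = part_size a + 1
     then of_nat (fact n) * of_int (sgn_part a) / of_nat (z_part a) else 0)"

lemma gfun_step:
  assumes "is_partition a" "a k > 0"
  shows "of_nat (a k) * gfun n a =
    of_nat (n choose k) * ((-1) ^ (k - 1) * of_nat (fact (k - 1)) * gfun (n - k) (a(k := a k - 1)))"
proof -
  let ?a' = "a(k := a k - 1)"
  note st = part_step[OF assms]
  have zp: "z_part ?a' > 0" using z_part_pos[OF st(1)] .
  show ?thesis
  proof (cases "n < k")
    case True
    hence "\<not> (n = part_size a \<or> n = part_size a + 1)" using st(2) by auto
    thus ?thesis using True by (simp add: gfun_def)
  next
    case False
    hence nk: "k \<le> n" by simp
    have cond: "(n = part_size a \<or> n = part_size a + 1) \<longleftrightarrow> (n - k = part_size ?a' \<or> n - k = part_size ?a' + 1)"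
      using st(2) nk by auto
    show ?thesis
    proof (cases "n = part_size a \<or> n = part_size a + 1")
      case False thus ?thesis using cond by (simp add: gfun_def)
    next
      case True
      hence T2: "n - k = part_size ?a' \<or> n - k = part_size ?a' + 1" using cond by simp
      have fn: "fact n = (n choose k) * (fact k * fact (n - k))"
        using binomial_fact_lemma[OF nk] by (simp only: ac_simps)
      have fk: "fact k = k * fact (k - 1)" using fact_reduce[OF st(6), where 'a=nat] by simp
      have L: "of_nat (a k) * gfun n a = of_nat (a k) * (of_nat (fact n) * of_int (sgn_part a) / of_nat (z_part a))"
        using True by (simp add: gfun_def)
      have R: "gfun (n - k) ?a' = of_nat (fact (n - k)) * of_int (sgn_part ?a') / of_nat (z_part ?a')"
        using T2 by (simp add: gfun_def)
      have ak: "(of_nat (a k) :: complex) \<noteq> 0" "(of_nat k :: complex) \<noteq> 0" using assms(2) st(6) by auto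
      have zz: "(of_nat (z_part ?a') :: complex) \<noteq> 0" using zp by simp
      show ?thesis unfolding L R st(4) st(5) fn fk
        using ak zz by (simp add: field_simps)
    qed
  qed
qed

lemma GG_zero:
  assumes "\<forall>i. a i = 0" "finite A"
  shows "GG A a = (if card A \<le> 1 then 1 else 0)"
  using sum_sign_perm[OF assms(2)] assms(1) by (simp add: GG_def bx_def)

lemma GG_main:
  assumes "is_partition a" "finite A"
  shows "GG A a = gfun (card A) a"
  using assms
proof (induction "part_length a" arbitrary: a A rule: less_induct)
  case less
  show ?case
  proof (cases "\<forall>i. a i = 0")
    case True
    have ps: "part_size a = 0" "z_part a = 1" "sgn_part a = 1" "part_length a = 0"
      using True by (simp_all add: part_size_def z_part_def sgn_part_def part_length_def)
    show ?thesis using GG_zero[OF True less.prems(2)] ps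
      by (cases "card A") (auto simp: gfun_def)
  next
    case False
    then obtain k where k: "a k > 0" by auto
    let ?a' = "a(k := a k - 1)"
    note st = part_step[OF less.prems(1) k]
    let ?K = "{Q. Q \<subseteq> A \<and> card Q = k}"
    have "of_nat (a k) * GG A a =
      (\<Sum>Q\<in>?K. (-1) ^ (k - 1) * of_nat (fact (k - 1)) * GG (A - Q) ?a')"
      by (rule GG_step[OF less.prems(1) k less.prems(2)])
    also have "\<dots> = (\<Sum>Q\<in>?K. (-1) ^ (k - 1) * of_nat (fact (k - 1)) * gfun (card A - k) ?a')"
    proof (rule sum.cong[OF refl])
      fix Q assume Q: "Q \<in> ?K"
      have "card (A - Q) = card A - k" using Q less.prems(2) by (auto simp: card_Diff_subset finite_subset)
      moreover have "GG (A - Q) ?a' = gfun (card (A - Q)) ?a'"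
        using less.hyps[of ?a' "A - Q"] st(1,3) less.prems(2) by simp
      ultimately show "(-1) ^ (k - 1) * of_nat (fact (k - 1)) * GG (A - Q) ?a' =
          (-1) ^ (k - 1) * of_nat (fact (k - 1)) * gfun (card A - k) ?a'" by simp
    qed
    also have "\<dots> = of_nat (card A choose k) * ((-1) ^ (k - 1) * of_nat (fact (k - 1)) * gfun (card A - k) ?a')"
      using n_subsets[OF less.prems(2), of k] by simp
    also have "\<dots> = of_nat (a k) * gfun (card A) a"
      using gfun_step[OF less.prems(1) k] by simp
    finally show ?thesis using k by simp
  qed
qed

theorem theorem2p5:
  fixes a :: "nat \<Rightarrow> nat" and n :: nat
  assumes "is_partition a"
  shows "signed_moment n (binomX a n) =
    (if n = part_size a \<or> n = part_size a + 1
     then of_int (sgn_part a) / of_nat (z_part a) else 0)"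
proof -
  have bx: "binomX a n = bx a {0..<n}"
    by (rule ext) (simp add: binomX_def bx_def cycle_count_def cc_def)
  have "signed_moment n (binomX a n) = 1 / of_nat (fact n) * GG {0..<n} a"
    unfolding signed_moment_def bx GG_def ..
  also have "\<dots> = 1 / of_nat (fact n) * gfun n a" using GG_main[OF assms, of "{0..<n}"] by simp
  finally show ?thesis by (simp add: gfun_def)
qed

end
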